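(* Let $G$ be an arbitrary group and let $S=\bigoplus_{g\in G}S_g$ be an epsilon-strongly $G$-graded ring with principal component $R=S_e$. If $\mathrm{Supp}(S)$ is finite, then $S$ is finitely generated both as a left $R$-module and as a right $R$-module.
   Context: All rings are associative with multiplicative identity $1\neq 0$. A ring $S$ is $G$-graded if $S=\bigoplus_{g\in G}S_g$ for additive subgroups $S_g$ with $S_gS_h\subseteq S_{gh}$ for all $g,h\in G$; $S_e$ is the principal component, and $\mathrm{Supp}(S)=\{g\in G: S_g\neq\{0\}\}$. $S$ is epsilon-strongly $G$-graded if (a) $S_gS_{g^{-1}}S_g=S_g$ for all $g\in G$, and (b) for each $g\in G$ the ideal $S_gS_{g^{-1}}$ of $S_e$ has a multiplicative identity. *)

theory Defs
  imports "HOL-Algebra.Group"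
begin

text \<open>The ring S is the whole type 'a (a ring with 1). A G-grading is given by a family
  Sg of subsets of S indexed by the elements of the group G (HOL-Algebra).\<close>

definition additive_subgroup :: "'a::ring_1 set \<Rightarrow> bool" where
  "additive_subgroup A \<longleftrightarrow> 0 \<in> A \<and> (\<forall>x\<in>A. \<forall>y\<in>A. x + y \<in> A) \<and> (\<forall>x\<in>A. - x \<in> A)"

definition subgroup_prod :: "'a::ring_1 set \<Rightarrow> 'a set \<Rightarrow> 'a set" where
  "subgroup_prod A B = {\<Sum>i<n. a i * b i | (n::nat) a b. \<forall>i<n. a i \<in> A \<and> b i \<in> B}"

definition graded_ring :: "('g, 'b) monoid_scheme \<Rightarrow> ('g \<Rightarrow> 'a::ring_1 set) \<Rightarrow> bool" where
  "graded_ring G Sg \<longleftrightarrow>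
     (\<forall>g\<in>carrier G. additive_subgroup (Sg g)) \<and>
     (\<forall>g\<in>carrier G. \<forall>h\<in>carrier G. \<forall>x\<in>Sg g. \<forall>y\<in>Sg h. x * y \<in> Sg (g \<otimes>\<^bsub>G\<^esub> h)) \<and>
     (\<forall>s::'a. \<exists>!f. (\<forall>g. g \<notin> carrier G \<longrightarrow> f g = 0) \<and> finite {g. f g \<noteq> 0} \<and>
                (\<forall>g\<in>carrier G. f g \<in> Sg g) \<and> s = (\<Sum>g\<in>{g. f g \<noteq> 0}. f g))"

definition support :: "('g, 'b) monoid_scheme \<Rightarrow> ('g \<Rightarrow> 'a::ring_1 set) \<Rightarrow> 'g set" where
  "support G Sg = {g \<in> carrier G. Sg g \<noteq> {0}}"

definition has_mult_identity :: "'a::ring_1 set \<Rightarrow> bool" where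
  "has_mult_identity I \<longleftrightarrow> (\<exists>e\<in>I. \<forall>x\<in>I. e * x = x \<and> x * e = x)"

definition epsilon_strongly_graded :: "('g, 'b) monoid_scheme \<Rightarrow> ('g \<Rightarrow> 'a::ring_1 set) \<Rightarrow> bool" where
  "epsilon_strongly_graded G Sg \<longleftrightarrow> graded_ring G Sg \<and>
     (\<forall>g\<in>carrier G. subgroup_prod (subgroup_prod (Sg g) (Sg (inv\<^bsub>G\<^esub> g))) (Sg g) = Sg g) \<and>
     (\<forall>g\<in>carrier G. has_mult_identity (subgroup_prod (Sg g) (Sg (inv\<^bsub>G\<^esub> g))))"

definition fin_gen_left_module :: "'a::ring_1 set \<Rightarrow> bool" where
  "fin_gen_left_module R \<longleftrightarrow> (\<exists>X. finite X \<and> (\<forall>s::'a. \<exists>c. (\<forall>x\<in>X. c x \<in> R) \<and> s = (\<Sum>x\<in>X. c x * x)))"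

definition fin_gen_right_module :: "'a::ring_1 set \<Rightarrow> bool" where
  "fin_gen_right_module R \<longleftrightarrow> (\<exists>X. finite X \<and> (\<forall>s::'a. \<exists>c. (\<forall>x\<in>X. c x \<in> R) \<and> s = (\<Sum>x\<in>X. x * c x)))"

end

theory Submission
  imports Defs
begin

lemma sp_elim:
  assumes "x \<in> subgroup_prod A B"
  obtains n :: nat and a b where "\<forall>i<n. a i \<in> A \<and> b i \<in> B" "x = (\<Sum>i<n. a i * b i)"
  using assms unfolding subgroup_prod_def by blast

lemma sp_single:
  assumes "a \<in> A" "b \<in> B"
  shows "a * b \<in> subgroup_prod A B"
  unfolding subgroup_prod_def
  apply (rule CollectI)
  apply (rule exI[of _ 1], rule exI[of _ "\<lambda>_. a"], rule exI[of _ "\<lambda>_. b"])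
  using assms by simp

lemma left_id_on:
  fixes s e :: "'a::ring_1"
  assumes "s \<in> subgroup_prod (subgroup_prod A B) C"
    and "\<forall>x\<in>subgroup_prod A B. e * x = x"
  shows "e * s = s"
proof -
  obtain n :: nat and a b where ab: "\<forall>i<n. a i \<in> subgroup_prod A B \<and> b i \<in> C" "s = (\<Sum>i<n. a i * b i)"
    using assms(1) by (rule sp_elim)
  have "e * s = (\<Sum>i<n. (e * a i) * b i)"
    using ab(2) by (simp add: sum_distrib_left mult.assoc)
  also have "\<dots> = (\<Sum>i<n. a i * b i)"
    using ab(1) assms(2) by (intro sum.cong) auto
  finally show ?thesis using ab(2) by simp
qed

lemma right_id_on:
  fixes s e :: "'a::ring_1"
  assumes "s \<in> subgroup_prod (subgroup_prod A B) A"
    and "\<forall>x\<in>subgroup_prod B A. x * e = x"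
  shows "s * e = s"
proof -
  obtain n :: nat and a b where ab: "\<forall>i<n. a i \<in> subgroup_prod A B \<and> b i \<in> A" "s = (\<Sum>i<n. a i * b i)"
    using assms(1) by (rule sp_elim)
  have "\<forall>i<n. a i * b i * e = a i * b i"
  proof (intro allI impI)
    fix i assume i: "i < n"
    have ai: "a i \<in> subgroup_prod A B" using ab(1) i by blast
    obtain m :: nat and x y where xy: "\<forall>j<m. x j \<in> A \<and> y j \<in> B" "a i = (\<Sum>j<m. x j * y j)"
      using ai by (rule sp_elim)
    have "a i * b i * e = (\<Sum>j<m. x j * (y j * b i * e))"
      using xy(2) by (simp add: sum_distrib_right mult.assoc)
    also have "\<dots> = (\<Sum>j<m. x j * (y j * b i))"
    proof (rule sum.cong)
      fix j assume "j \<in> {..<m}"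
      then have "y j * b i \<in> subgroup_prod B A" using xy(1) ab(1) i by (intro sp_single) auto
      then show "x j * (y j * b i * e) = x j * (y j * b i)" using assms(2) by simp
    qed simp
    also have "\<dots> = a i * b i"
      using xy(2) by (simp add: sum_distrib_right mult.assoc)
    finally show "a i * b i * e = a i * b i" .
  qed
  then show ?thesis using ab(2) by (simp add: sum_distrib_right)
qed

definition lspan :: "'a::ring_1 set \<Rightarrow> 'a set \<Rightarrow> 'a set" where
  "lspan R X = {s. \<exists>c. (\<forall>x\<in>X. c x \<in> R) \<and> s = (\<Sum>x\<in>X. c x * x)}"

definition rspan :: "'a::ring_1 set \<Rightarrow> 'a set \<Rightarrow> 'a set" where
  "rspan R X = {s. \<exists>c. (\<forall>x\<in>X. c x \<in> R) \<and> s = (\<Sum>x\<in>X. x * c x)}"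

lemma lspan_zero: "additive_subgroup R \<Longrightarrow> 0 \<in> lspan R X"
  unfolding lspan_def additive_subgroup_def by (rule CollectI, rule exI[of _ "\<lambda>_. 0"]) simp

lemma rspan_zero: "additive_subgroup R \<Longrightarrow> 0 \<in> rspan R X"
  unfolding rspan_def additive_subgroup_def by (rule CollectI, rule exI[of _ "\<lambda>_. 0"]) simp

lemma lspan_add:
  assumes "additive_subgroup R" "s \<in> lspan R X" "t \<in> lspan R X"
  shows "s + t \<in> lspan R X"
proof -
  obtain c d where "\<forall>x\<in>X. c x \<in> R" "s = (\<Sum>x\<in>X. c x * x)" "\<forall>x\<in>X. d x \<in> R" "t = (\<Sum>x\<in>X. d x * x)"
    using assms(2,3) unfolding lspan_def by blast
  then show ?thesis using assms(1) unfolding lspan_def additive_subgroup_def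
    by (intro CollectI exI[of _ "\<lambda>x. c x + d x"]) (simp add: sum.distrib distrib_right)
qed

lemma rspan_add:
  assumes "additive_subgroup R" "s \<in> rspan R X" "t \<in> rspan R X"
  shows "s + t \<in> rspan R X"
proof -
  obtain c d where "\<forall>x\<in>X. c x \<in> R" "s = (\<Sum>x\<in>X. x * c x)" "\<forall>x\<in>X. d x \<in> R" "t = (\<Sum>x\<in>X. x * d x)"
    using assms(2,3) unfolding rspan_def by blast
  then show ?thesis using assms(1) unfolding rspan_def additive_subgroup_def
    by (intro CollectI exI[of _ "\<lambda>x. c x + d x"]) (simp add: sum.distrib distrib_left)
qed

lemma lspan_gen:
  assumes "additive_subgroup R" "finite X" "x0 \<in> X" "r \<in> R"
  shows "r * x0 \<in> lspan R X"
proof -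
  have "(\<Sum>x\<in>X. (if x = x0 then r else 0) * x) = (\<Sum>x\<in>X. if x0 = x then r * x else 0)"
    by (intro sum.cong) auto
  also have "\<dots> = r * x0" using assms(2,3) by (simp add: sum.delta)
  finally show ?thesis using assms unfolding lspan_def additive_subgroup_def
    by (intro CollectI exI[of _ "\<lambda>x. if x = x0 then r else 0"]) auto
qed

lemma rspan_gen:
  assumes "additive_subgroup R" "finite X" "x0 \<in> X" "r \<in> R"
  shows "x0 * r \<in> rspan R X"
proof -
  have "(\<Sum>x\<in>X. x * (if x = x0 then r else 0)) = (\<Sum>x\<in>X. if x0 = x then x * r else 0)"
    by (intro sum.cong) auto
  also have "\<dots> = x0 * r" using assms(2,3) by (simp add: sum.delta)
  finally show ?thesis using assms unfolding rspan_def additive_subgroup_def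
    by (intro CollectI exI[of _ "\<lambda>x. if x = x0 then r else 0"]) auto
qed

lemma lspan_sum:
  assumes "additive_subgroup R" "finite I" "\<forall>i\<in>I. f i \<in> lspan R X"
  shows "sum f I \<in> lspan R X"
  using assms(2,3)
proof (induction I rule: finite_induct)
  case empty then show ?case using lspan_zero[OF assms(1)] by simp
next
  case (insert i I) then show ?case using lspan_add[OF assms(1)] by simp
qed

lemma rspan_sum:
  assumes "additive_subgroup R" "finite I" "\<forall>i\<in>I. f i \<in> rspan R X"
  shows "sum f I \<in> rspan R X"
  using assms(2,3)
proof (induction I rule: finite_induct)
  case empty then show ?case using rspan_zero[OF assms(1)] by simp
next
  case (insert i I) then show ?case using rspan_add[OF assms(1)] by simp
qed

theorem proposition3p3:
  fixes G :: "('g, 'b) monoid_scheme" and Sg :: "'g \<Rightarrow> 'a::ring_1 set"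
  assumes "group G"
    and "epsilon_strongly_graded G Sg"
    and "finite (support G Sg)"
  shows "fin_gen_left_module (Sg \<one>\<^bsub>G\<^esub>) \<and> fin_gen_right_module (Sg \<one>\<^bsub>G\<^esub>)"
proof -
  let ?R = "Sg \<one>\<^bsub>G\<^esub>"
  let ?supp = "support G Sg"
  have gr: "graded_ring G Sg"
    and tri: "\<And>g. g \<in> carrier G \<Longrightarrow> subgroup_prod (subgroup_prod (Sg g) (Sg (inv\<^bsub>G\<^esub> g))) (Sg g) = Sg g"
    and hid: "\<And>g. g \<in> carrier G \<Longrightarrow> has_mult_identity (subgroup_prod (Sg g) (Sg (inv\<^bsub>G\<^esub> g)))"
    using assms(2)[unfolded epsilon_strongly_graded_def] by blast+
  have addsub: "\<And>g. g \<in> carrier G \<Longrightarrow> additive_subgroup (Sg g)"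
    and mul: "\<And>g h x y. g \<in> carrier G \<Longrightarrow> h \<in> carrier G \<Longrightarrow> x \<in> Sg g \<Longrightarrow> y \<in> Sg h \<Longrightarrow> x * y \<in> Sg (g \<otimes>\<^bsub>G\<^esub> h)"
    using gr[unfolded graded_ring_def, THEN conjunct1]
      gr[unfolded graded_ring_def, THEN conjunct2, THEN conjunct1] by blast+
  have one: "\<one>\<^bsub>G\<^esub> \<in> carrier G" using assms(1) by (simp add: group.is_monoid monoid.one_closed)
  have addR: "additive_subgroup ?R" using addsub one .
  have invc: "\<And>g. g \<in> carrier G \<Longrightarrow> inv\<^bsub>G\<^esub> g \<in> carrier G" using assms(1) by (simp add: group.inv_closed)
  have invinv: "\<And>g. g \<in> carrier G \<Longrightarrow> inv\<^bsub>G\<^esub> (inv\<^bsub>G\<^esub> g) = g" using assms(1) by (simp add: group.inv_inv)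
  have linv: "\<And>g. g \<in> carrier G \<Longrightarrow> inv\<^bsub>G\<^esub> g \<otimes>\<^bsub>G\<^esub> g = \<one>\<^bsub>G\<^esub>" using assms(1) by (simp add: group.l_inv)
  have rinv: "\<And>g. g \<in> carrier G \<Longrightarrow> g \<otimes>\<^bsub>G\<^esub> inv\<^bsub>G\<^esub> g = \<one>\<^bsub>G\<^esub>" using assms(1) by (simp add: group.r_inv)
  have supp_c: "\<And>g. g \<in> ?supp \<Longrightarrow> g \<in> carrier G" unfolding support_def by auto
  have decomp: "\<exists>f. finite {g. f g \<noteq> 0} \<and> {g. f g \<noteq> 0} \<subseteq> ?supp \<and> (\<forall>g\<in>carrier G. f g \<in> Sg g)
                  \<and> s = (\<Sum>g\<in>{g. f g \<noteq> 0}. f g)" for s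
  proof -
    obtain f where f: "\<forall>g. g \<notin> carrier G \<longrightarrow> f g = 0" "finite {g. f g \<noteq> 0}"
      "\<forall>g\<in>carrier G. f g \<in> Sg g" "s = (\<Sum>g\<in>{g. f g \<noteq> 0}. f g)"
      using gr[unfolded graded_ring_def, THEN conjunct2, THEN conjunct2, rule_format, of s] by (rule ex1E) blast
    have "{g. f g \<noteq> 0} \<subseteq> ?supp"
    proof
      fix g assume "g \<in> {g. f g \<noteq> 0}"
      then have nz: "f g \<noteq> 0" by simp
      then have gc: "g \<in> carrier G" using f(1) by blast
      then have "f g \<in> Sg g" using f(3) by blast
      then have "Sg g \<noteq> {0}" using nz by blast
      then show "g \<in> ?supp" using gc unfolding support_def by blast
    qed
    note sub = this
    show ?thesis by (rule exI[of _ f]) (use f sub in blast)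
  qed
  have rex: "\<forall>g. \<exists>n u v. g \<in> ?supp \<longrightarrow> (\<forall>i<(n::nat). u i \<in> Sg g \<and> v i \<in> Sg (inv\<^bsub>G\<^esub> g)) \<and>
      (\<forall>s\<in>Sg g. s = (\<Sum>i<n. u i * (v i * s)))"
  proof
    fix g
    show "\<exists>n u v. g \<in> ?supp \<longrightarrow> (\<forall>i<(n::nat). u i \<in> Sg g \<and> v i \<in> Sg (inv\<^bsub>G\<^esub> g)) \<and>
      (\<forall>s\<in>Sg g. s = (\<Sum>i<n. u i * (v i * s)))"
    proof (cases "g \<in> ?supp")
      case False then show ?thesis by blast
    next
      case True
      then have gc: "g \<in> carrier G" by (rule supp_c)
      obtain e where e: "e \<in> subgroup_prod (Sg g) (Sg (inv\<^bsub>G\<^esub> g))"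
        "\<forall>x\<in>subgroup_prod (Sg g) (Sg (inv\<^bsub>G\<^esub> g)). e * x = x \<and> x * e = x"
        using hid[OF gc] unfolding has_mult_identity_def by blast
      obtain n :: nat and u v where uv: "\<forall>i<n. u i \<in> Sg g \<and> v i \<in> Sg (inv\<^bsub>G\<^esub> g)" "e = (\<Sum>i<n. u i * v i)"
        using e(1) by (rule sp_elim)
      have "\<forall>s\<in>Sg g. s = (\<Sum>i<n. u i * (v i * s))"
      proof
        fix s assume s: "s \<in> Sg g"
        have "s \<in> subgroup_prod (subgroup_prod (Sg g) (Sg (inv\<^bsub>G\<^esub> g))) (Sg g)" using tri[OF gc] s by simp
        then have "e * s = s" by (rule left_id_on) (use e(2) in blast)
        then show "s = (\<Sum>i<n. u i * (v i * s))" using uv(2) by (simp add: sum_distrib_right mult.assoc)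
      qed
      note key = this
      show ?thesis by (rule exI[of _ n], rule exI[of _ u], rule exI[of _ v], rule impI, rule conjI[OF uv(1) key])
    qed
  qed
  obtain N where NUV1: "\<forall>g. \<exists>u v. g \<in> ?supp \<longrightarrow> (\<forall>i<((N g)::nat). u i \<in> Sg g \<and> v i \<in> Sg (inv\<^bsub>G\<^esub> g)) \<and> (\<forall>s\<in>Sg g. s = (\<Sum>i<(N g). u i * (v i * s)))"
    using choice[OF rex] by (rule exE)
  obtain U where NUV2: "\<forall>g. \<exists>v. g \<in> ?supp \<longrightarrow> (\<forall>i<((N g)::nat). (U g) i \<in> Sg g \<and> v i \<in> Sg (inv\<^bsub>G\<^esub> g)) \<and> (\<forall>s\<in>Sg g. s = (\<Sum>i<(N g). (U g) i * (v i * s)))"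
    using choice[OF NUV1] by (rule exE)
  obtain V where NUV3: "\<forall>g. g \<in> ?supp \<longrightarrow> (\<forall>i<((N g)::nat). (U g) i \<in> Sg g \<and> (V g) i \<in> Sg (inv\<^bsub>G\<^esub> g)) \<and> (\<forall>s\<in>Sg g. s = (\<Sum>i<(N g). (U g) i * ((V g) i * s)))"
    using choice[OF NUV2] by (rule exE)
  have NUV: "\<And>g. g \<in> ?supp \<Longrightarrow> (\<forall>i<((N g)::nat). (U g) i \<in> Sg g \<and> (V g) i \<in> Sg (inv\<^bsub>G\<^esub> g)) \<and> (\<forall>s\<in>Sg g. s = (\<Sum>i<(N g). (U g) i * ((V g) i * s)))"
    by (rule NUV3[rule_format])
  have lex: "\<forall>g. \<exists>n p q. g \<in> ?supp \<longrightarrow> (\<forall>i<(n::nat). p i \<in> Sg (inv\<^bsub>G\<^esub> g) \<and> q i \<in> Sg g) \<and>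
      (\<forall>s\<in>Sg g. s = (\<Sum>i<n. (s * p i) * q i))"
  proof
    fix g
    show "\<exists>n p q. g \<in> ?supp \<longrightarrow> (\<forall>i<(n::nat). p i \<in> Sg (inv\<^bsub>G\<^esub> g) \<and> q i \<in> Sg g) \<and>
      (\<forall>s\<in>Sg g. s = (\<Sum>i<n. (s * p i) * q i))"
    proof (cases "g \<in> ?supp")
      case False then show ?thesis by blast
    next
      case True
      then have gc: "g \<in> carrier G" by (rule supp_c)
      obtain e where e: "e \<in> subgroup_prod (Sg (inv\<^bsub>G\<^esub> g)) (Sg g)"
        "\<forall>x\<in>subgroup_prod (Sg (inv\<^bsub>G\<^esub> g)) (Sg g). e * x = x \<and> x * e = x"
        using hid[OF invc[OF gc]] invinv[OF gc] unfolding has_mult_identity_def by auto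
      obtain n :: nat and p q where pq: "\<forall>i<n. p i \<in> Sg (inv\<^bsub>G\<^esub> g) \<and> q i \<in> Sg g" "e = (\<Sum>i<n. p i * q i)"
        using e(1) by (rule sp_elim)
      have "\<forall>s\<in>Sg g. s = (\<Sum>i<n. (s * p i) * q i)"
      proof
        fix s assume s: "s \<in> Sg g"
        have "s \<in> subgroup_prod (subgroup_prod (Sg g) (Sg (inv\<^bsub>G\<^esub> g))) (Sg g)" using tri[OF gc] s by simp
        then have "s * e = s" by (rule right_id_on) (use e(2) in blast)
        then show "s = (\<Sum>i<n. (s * p i) * q i)" using pq(2) by (simp add: sum_distrib_left mult.assoc)
      qed
      note key = this
      show ?thesis by (rule exI[of _ n], rule exI[of _ p], rule exI[of _ q], rule impI, rule conjI[OF pq(1) key])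
    qed
  qed
  obtain M where MPQ1: "\<forall>g. \<exists>p q. g \<in> ?supp \<longrightarrow> (\<forall>i<((M g)::nat). p i \<in> Sg (inv\<^bsub>G\<^esub> g) \<and> q i \<in> Sg g) \<and> (\<forall>s\<in>Sg g. s = (\<Sum>i<(M g). (s * p i) * q i))"
    using choice[OF lex] by (rule exE)
  obtain P where MPQ2: "\<forall>g. \<exists>q. g \<in> ?supp \<longrightarrow> (\<forall>i<((M g)::nat). (P g) i \<in> Sg (inv\<^bsub>G\<^esub> g) \<and> q i \<in> Sg g) \<and> (\<forall>s\<in>Sg g. s = (\<Sum>i<(M g). (s * (P g) i) * q i))"
    using choice[OF MPQ1] by (rule exE)
  obtain Q where MPQ3: "\<forall>g. g \<in> ?supp \<longrightarrow> (\<forall>i<((M g)::nat). (P g) i \<in> Sg (inv\<^bsub>G\<^esub> g) \<and> (Q g) i \<in> Sg g) \<and> (\<forall>s\<in>Sg g. s = (\<Sum>i<(M g). (s * (P g) i) * (Q g) i))"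
    using choice[OF MPQ2] by (rule exE)
  have MPQ: "\<And>g. g \<in> ?supp \<Longrightarrow> (\<forall>i<((M g)::nat). (P g) i \<in> Sg (inv\<^bsub>G\<^esub> g) \<and> (Q g) i \<in> Sg g) \<and> (\<forall>s\<in>Sg g. s = (\<Sum>i<(M g). (s * (P g) i) * (Q g) i))"
    by (rule MPQ3[rule_format])
  define XL where "XL = (\<Union>g\<in>?supp. Q g ` {..<M g})"
  have finXL: "finite XL" unfolding XL_def using assms(3) by auto
  have compL: "s \<in> lspan ?R XL" if g: "g \<in> ?supp" and s: "s \<in> Sg g" for g s
  proof -
    have gc: "g \<in> carrier G" using g by (rule supp_c)
    have "(\<Sum>i<M g. (s * P g i) * Q g i) \<in> lspan ?R XL"
    proof (rule lspan_sum[OF addR], simp, intro ballI)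
      fix i assume "i \<in> {..<M g}"
      then have i: "i < M g" by simp
      have "P g i \<in> Sg (inv\<^bsub>G\<^esub> g)" using MPQ[OF g] i by blast
      then have "s * P g i \<in> Sg (g \<otimes>\<^bsub>G\<^esub> inv\<^bsub>G\<^esub> g)" by (rule mul[OF gc invc[OF gc] s])
      then have "s * P g i \<in> ?R" by (simp only: rinv[OF gc])
      moreover have "Q g i \<in> XL" unfolding XL_def using g i by blast
      ultimately show "(s * P g i) * Q g i \<in> lspan ?R XL" using lspan_gen[OF addR finXL] by blast
    qed
    moreover have "s = (\<Sum>i<M g. (s * P g i) * Q g i)" by (rule bspec[OF conjunct2[OF MPQ[OF g]] s])
    ultimately show ?thesis by (rule back_subst[OF _ sym])
  qed
  have L: "fin_gen_left_module ?R"
    unfolding fin_gen_left_module_def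
  proof (rule exI[of _ XL], intro conjI allI)
    show "finite XL" by (rule finXL)
    fix s :: 'a
    obtain f where f: "finite {g. f g \<noteq> 0}" "{g. f g \<noteq> 0} \<subseteq> ?supp" "\<forall>g\<in>carrier G. f g \<in> Sg g"
      "s = (\<Sum>g\<in>{g. f g \<noteq> 0}. f g)" using decomp by blast
    have "s \<in> lspan ?R XL"
      unfolding f(4) using f(1-3) supp_c compL by (intro lspan_sum[OF addR]) blast+
    then show "\<exists>c. (\<forall>x\<in>XL. c x \<in> ?R) \<and> s = (\<Sum>x\<in>XL. c x * x)" unfolding lspan_def by blast
  qed
  define XR where "XR = (\<Union>g\<in>?supp. U g ` {..<N g})"
  have finXR: "finite XR" unfolding XR_def using assms(3) by auto
  have compR: "s \<in> rspan ?R XR" if g: "g \<in> ?supp" and s: "s \<in> Sg g" for g s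
  proof -
    have gc: "g \<in> carrier G" using g by (rule supp_c)
    have "(\<Sum>i<N g. U g i * (V g i * s)) \<in> rspan ?R XR"
    proof (rule rspan_sum[OF addR], simp, intro ballI)
      fix i assume "i \<in> {..<N g}"
      then have i: "i < N g" by simp
      have "V g i \<in> Sg (inv\<^bsub>G\<^esub> g)" using NUV[OF g] i by blast
      then have "V g i * s \<in> Sg (inv\<^bsub>G\<^esub> g \<otimes>\<^bsub>G\<^esub> g)" by (rule mul[OF invc[OF gc] gc _ s])
      then have "V g i * s \<in> ?R" by (simp only: linv[OF gc])
      moreover have "U g i \<in> XR" unfolding XR_def using g i by blast
      ultimately show "U g i * (V g i * s) \<in> rspan ?R XR" using rspan_gen[OF addR finXR] by blast
    qed
    moreover have "s = (\<Sum>i<N g. U g i * (V g i * s))" by (rule bspec[OF conjunct2[OF NUV[OF g]] s])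
    ultimately show ?thesis by (rule back_subst[OF _ sym])
  qed
  have R: "fin_gen_right_module ?R"
    unfolding fin_gen_right_module_def
  proof (rule exI[of _ XR], intro conjI allI)
    show "finite XR" by (rule finXR)
    fix s :: 'a
    obtain f where f: "finite {g. f g \<noteq> 0}" "{g. f g \<noteq> 0} \<subseteq> ?supp" "\<forall>g\<in>carrier G. f g \<in> Sg g"
      "s = (\<Sum>g\<in>{g. f g \<noteq> 0}. f g)" using decomp by blast
    have "s \<in> rspan ?R XR"
      unfolding f(4) using f(1-3) supp_c compR by (intro rspan_sum[OF addR]) blast+
    then show "\<exists>c. (\<forall>x\<in>XR. c x \<in> ?R) \<and> s = (\<Sum>x\<in>XR. x * c x)" unfolding rspan_def by blast
  qed
  show ?thesis using L R by blast
qed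

end
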